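(* There is an online algorithm for the online covering problem that maintains a nondecreasing $x\in\mathbb{R}^n_{\ge 0}$ satisfying all arrived constraints, whose final objective value satisfies $\langle c,x\rangle\le O(\log n)\cdot\mathsf{OPT}$, and such that the number of arriving constraints on which the algorithm performs an update (i.e., constraints found violated when processed) is at most $\mathrm{poly}(n,\log\mathsf{OPT},\log(1/\alpha_1))$, where $\alpha_1=\min_{j\in[n]}\{c_j/a_{1j}: a_{1j}>0\}$.
   Context: Online covering problem: the LP is $\min \langle c,x\rangle$ over $x\in\mathbb{R}^n_{\ge0}$ subject to $Ax\ge \mathbf{1}$, where $A\in\mathbb{R}^{m\times n}_{\ge 0}$, $c\in\mathbb{R}^n_{>0}$ is known in advance, and $\mathbf{1}$ is the all-ones vector. The rows of $A$ arrive one at a time (the number $m$ may be unknown); in round $i$ the entries $a_{i1},\dots,a_{in}$ are revealed, at least one of them positive, and the algorithm must increase $x$ monotonically (coordinates never decrease) so that $\sum_j a_{ij}x_j\ge 1$. $\mathsf{OPT}$ denotes the optimal value of the LP. *)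

theory Defs
  imports Complex_Main
begin

text \<open>Vectors in R^n are functions nat => real, only indices j < n matter.
  A row (constraint) is a function nat => real; an instance's row sequence is
  a :: nat => nat => real, row i being a i.\<close>

definition cost :: "nat \<Rightarrow> (nat \<Rightarrow> real) \<Rightarrow> (nat \<Rightarrow> real) \<Rightarrow> real" where
  "cost n c x = (\<Sum>j<n. c j * x j)"

definition feasible :: "nat \<Rightarrow> (nat \<Rightarrow> nat \<Rightarrow> real) \<Rightarrow> nat \<Rightarrow> (nat \<Rightarrow> real) \<Rightarrow> bool" where
  "feasible n a m x \<longleftrightarrow> (\<forall>j<n. 0 \<le> x j) \<and> (\<forall>i<m. (\<Sum>j<n. a i j * x j) \<ge> 1)"

definition OPT :: "nat \<Rightarrow> (nat \<Rightarrow> real) \<Rightarrow> (nat \<Rightarrow> nat \<Rightarrow> real) \<Rightarrow> nat \<Rightarrow> real" where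
  "OPT n c a m = Inf {cost n c x | x. feasible n a m x}"

text \<open>alpha_1 = min over j with a_{1j} > 0 of c_j / a_{1j} (first row is a 0).\<close>
definition alpha1 :: "nat \<Rightarrow> (nat \<Rightarrow> real) \<Rightarrow> (nat \<Rightarrow> nat \<Rightarrow> real) \<Rightarrow> real" where
  "alpha1 n c a = Min {c j / a 0 j | j. j < n \<and> a 0 j > 0}"

end

theory Submission
  imports Defs
begin


locale inst =
  fixes n :: nat and c :: "nat \<Rightarrow> real" and a :: "nat \<Rightarrow> nat \<Rightarrow> real"
  assumes n1: "n \<ge> 1" and cpos: "\<And>j. j < n \<Longrightarrow> c j > 0"
    and anneg: "\<And>i j. j < n \<Longrightarrow> 0 \<le> a i j" and apos: "\<And>i. \<exists>j<n. 0 < a i j"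
begin

lemma feas_ex: "\<exists>x. feasible n a m x"
proof -
  define x where "x = (\<lambda>j. \<Sum>i<m. (if a i j > 0 then 1 / a i j else 0))"
  have "feasible n a m x" unfolding feasible_def
  proof (intro conjI allI impI)
    fix j assume "j < n" then show "0 \<le> x j" unfolding x_def by (auto intro!: sum_nonneg)
  next
    fix i assume im: "i < m"
    obtain j where j: "j < n" "0 < a i j" using apos by blast
    have "1 = a i j * (1 / a i j)" using j by simp
    also have "\<dots> \<le> a i j * x j"
    proof -
      have "(1 / a i j) = (if a i j > 0 then 1 / a i j else 0)" using j by simp
      also have "\<dots> \<le> x j" unfolding x_def
        using im by (intro member_le_sum) (auto)
      finally show ?thesis using j by (intro mult_left_mono) auto
    qed
    also have "\<dots> \<le> (\<Sum>j<n. a i j * x j)"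
      using j by (intro member_le_sum) (auto intro!: mult_nonneg_nonneg anneg sum_nonneg simp: x_def)
    finally show "(\<Sum>j<n. a i j * x j) \<ge> 1" .
  qed
  then show ?thesis by blast
qed

lemma alpha_set: "finite {c j / a 0 j | j. j < n \<and> a 0 j > 0}" "{c j / a 0 j | j. j < n \<and> a 0 j > 0} \<noteq> {}"
  using apos[of 0] by auto

lemma alpha_pos: "alpha1 n c a > 0"
  unfolding alpha1_def using alpha_set cpos by (subst Min_gr_iff) auto

lemma alpha_le: "j < n \<Longrightarrow> a 0 j > 0 \<Longrightarrow> alpha1 n c a \<le> c j / a 0 j"
  unfolding alpha1_def using alpha_set by (intro Min_le) auto

lemma cost_ge_alpha: assumes "m \<ge> 1" "feasible n a m x" shows "cost n c x \<ge> alpha1 n c a"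
proof -
  have x0: "\<And>j. j<n \<Longrightarrow> 0 \<le> x j" and r: "(\<Sum>j<n. a 0 j * x j) \<ge> 1"
    using assms unfolding feasible_def by auto
  have "alpha1 n c a \<le> alpha1 n c a * (\<Sum>j<n. a 0 j * x j)"
    using r alpha_pos by simp
  also have "\<dots> = (\<Sum>j<n. alpha1 n c a * a 0 j * x j)" by (simp add: sum_distrib_left mult.assoc)
  also have "\<dots> \<le> (\<Sum>j<n. c j * x j)"
  proof (intro sum_mono)
    fix j assume "j \<in> {..<n}" then have j: "j < n" by simp
    show "alpha1 n c a * a 0 j * x j \<le> c j * x j"
    proof (cases "a 0 j > 0")
      case True
      then have "alpha1 n c a * a 0 j \<le> c j" using alpha_le[OF j True] by (simp add: field_simps)
      then show ?thesis using x0[OF j] by (intro mult_right_mono) auto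
    next
      case False then have "a 0 j = 0" using anneg[OF j, of 0] by simp
      then show ?thesis using x0[OF j] cpos[OF j] by simp
    qed
  qed
  finally show ?thesis unfolding cost_def .
qed

lemma cost_nonneg: "feasible n a m x \<Longrightarrow> cost n c x \<ge> 0"
  unfolding cost_def feasible_def using cpos by (force intro!: sum_nonneg mult_nonneg_nonneg)

lemma OPT_set_ne: "{cost n c x | x. feasible n a m x} \<noteq> {}" using feas_ex by auto
lemma OPT_bdd: "bdd_below {cost n c x | x. feasible n a m x}"
  unfolding bdd_below_def using cost_nonneg by blast

lemma OPT_ge_alpha: "m \<ge> 1 \<Longrightarrow> OPT n c a m \<ge> alpha1 n c a"
  unfolding OPT_def using OPT_set_ne cost_ge_alpha by (intro cInf_greatest) auto

lemma OPT_pos: "m \<ge> 1 \<Longrightarrow> OPT n c a m > 0"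
  using OPT_ge_alpha alpha_pos by (meson less_le_trans)

lemma feas_mono: "feasible n a (Suc m) x \<Longrightarrow> feasible n a m x"
  unfolding feasible_def by auto

lemma OPT_mono: "OPT n c a m \<le> OPT n c a (Suc m)"
  unfolding OPT_def using OPT_set_ne OPT_bdd feas_mono
  by (intro cInf_superset_mono) auto

lemma OPT_mono': "m \<le> m' \<Longrightarrow> OPT n c a m \<le> OPT n c a m'"
  by (induction m' rule: dec_induct) (auto intro: order_trans OPT_mono)

lemma OPT_le_cost: "feasible n a m x \<Longrightarrow> OPT n c a m \<le> cost n c x"
  unfolding OPT_def using OPT_bdd by (intro cInf_lower) auto

lemma OPT_witness: "OPT n c a m < z \<Longrightarrow> \<exists>x. feasible n a m x \<and> cost n c x < z"
proof -
  assume "OPT n c a m < z"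
  then obtain y where "y \<in> {cost n c x | x. feasible n a m x}" "y < z"
    using cInf_lessD[OF OPT_set_ne] unfolding OPT_def by blast
  then show ?thesis by blast
qed

end



definition Sf :: "nat \<Rightarrow> (nat \<Rightarrow> real) \<Rightarrow> (nat \<Rightarrow> real) \<Rightarrow> real \<Rightarrow> real" where
  "Sf n w L u = (\<Sum>j<n. w j * exp (L j + w j * u) / real n)"
definition kst :: "nat \<Rightarrow> (nat \<Rightarrow> real) \<Rightarrow> (nat \<Rightarrow> real) \<Rightarrow> nat" where
  "kst n w L = (LEAST k::nat. 1 \<le> Sf n w L (real k / real n))"
definition cz :: "nat \<Rightarrow> (nat \<Rightarrow> real) \<Rightarrow> real" where
  "cz n L = (\<Sum>j<n. exp (L j) / real n)"

locale sfl =
  fixes n :: nat and w L :: "nat \<Rightarrow> real"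
  assumes n1: "n \<ge> 1" and w0: "\<And>j. j < n \<Longrightarrow> w j \<ge> 0" and L0: "\<And>j. j < n \<Longrightarrow> L j \<ge> 0"
    and wpos: "\<exists>j<n. w j > 0" and S0: "Sf n w L 0 < 1"
begin

lemma ex_k: "\<exists>k::nat. 1 \<le> Sf n w L (real k / real n)"
proof -
  obtain j where j: "j < n" "w j > 0" using wpos by blast
  obtain k :: nat where k: "real n * real n / (w j * w j) < real k" using reals_Archimedean2 by blast
  define u where "u = real k / real n"
  have nn: "real n > 0" using n1 by simp
  have ww: "w j * w j > 0" using j by simp
  have "real n / (w j * w j) = (real n * real n / (w j * w j)) / real n" using nn by simp
  also have "\<dots> < real k / real n" using k nn by (rule divide_strict_right_mono)
  finally have "real n / (w j * w j) < u" unfolding u_def .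
  then have u1: "real n < w j * w j * u" using ww by (simp add: pos_divide_less_eq mult.commute)
  have "exp (L j + w j * u) \<ge> 1 + w j * u"
  proof -
    have "1 + w j * u \<le> exp (w j * u)" by (rule exp_ge_add_one_self)
    also have "\<dots> \<le> exp (L j + w j * u)" using L0[OF j(1)] by simp
    finally show ?thesis .
  qed
  then have "w j * exp (L j + w j * u) \<ge> w j * (1 + w j * u)" using j by (intro mult_left_mono) auto
  moreover have "w j * (1 + w j * u) \<ge> real n"
  proof -
    have "w j * (1 + w j * u) = w j + w j * w j * u" by (simp add: distrib_left mult.assoc)
    then show ?thesis using u1 j by linarith
  qed
  ultimately have t: "w j * exp (L j + w j * u) / real n \<ge> 1" using nn by (simp add: field_simps)
  have "w j * exp (L j + w j * u) / real n \<le> Sf n w L u" unfolding Sf_def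
    using j w0 nn by (intro member_le_sum) (auto intro!: divide_nonneg_pos mult_nonneg_nonneg)
  then show ?thesis using t unfolding u_def by (intro exI[of _ k]) auto
qed

abbreviation "k \<equiv> kst n w L"
abbreviation "tau \<equiv> real k / real n"

lemma k_prop: "1 \<le> Sf n w L tau"
  unfolding kst_def using ex_k by (rule LeastI_ex)

lemma k_pos: "k \<ge> 1"
proof (rule ccontr)
  assume "\<not> k \<ge> 1" then have "k = 0" by simp
  then show False using k_prop S0 by simp
qed

lemma tau_ge: "tau \<ge> 1 / real n"
  using k_pos n1 by (simp add: divide_right_mono)

lemma tau_nonneg: "tau \<ge> 0" by simp

lemma w_lt: "j < n \<Longrightarrow> w j < real n"
proof -
  assume j: "j < n"
  have nn: "real n > 0" using n1 by simp
  have "w j * exp (L j + w j * 0) / real n \<le> Sf n w L 0" unfolding Sf_def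
    using j w0 nn by (intro member_le_sum) (auto intro!: divide_nonneg_pos mult_nonneg_nonneg)
  then have "w j * exp (L j) / real n < 1" using S0 by simp
  then have "w j * exp (L j) < real n" using nn by (simp add: field_simps)
  moreover have "w j \<le> w j * exp (L j)" using w0[OF j] L0[OF j] by (simp add: mult_le_cancel_left1)
  ultimately show ?thesis by simp
qed

lemma S_tau_le: "Sf n w L tau \<le> 3"
proof -
  have nn: "real n > 0" using n1 by simp
  define u where "u = real (k - 1) / real n"
  have lt: "Sf n w L u < 1" unfolding u_def kst_def
    using not_less_Least[of "k - 1" "\<lambda>k. 1 \<le> Sf n w L (real k / real n)"] k_pos
    unfolding kst_def by force
  have tu: "tau = u + 1 / real n" unfolding u_def using k_pos nn
    by (simp add: of_nat_diff field_simps)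
  have "Sf n w L tau \<le> (\<Sum>j<n. exp 1 * (w j * exp (L j + w j * u) / real n))" unfolding Sf_def
  proof (intro sum_mono)
    fix j assume "j \<in> {..<n}" then have j: "j < n" by simp
    have "exp (L j + w j * tau) = exp (L j + w j * u) * exp (w j / real n)"
      unfolding tu by (simp add: algebra_simps exp_add[symmetric])
    also have "\<dots> \<le> exp (L j + w j * u) * exp 1"
      using w_lt[OF j] nn by (intro mult_left_mono) (auto simp: field_simps)
    finally have "w j * exp (L j + w j * tau) \<le> w j * (exp (L j + w j * u) * exp 1)"
      using w0[OF j] by (intro mult_left_mono) auto
    then show "w j * exp (L j + w j * tau) / real n \<le> exp 1 * (w j * exp (L j + w j * u) / real n)"
      using nn by (simp add: field_simps)
  qed
  also have "\<dots> = exp 1 * Sf n w L u" unfolding Sf_def by (simp add: sum_distrib_left)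
  also have "\<dots> \<le> exp 1 * 1" using lt by (intro mult_left_mono) auto
  also have "\<dots> \<le> 3" using exp_le by simp
  finally show ?thesis .
qed

lemma aux1: "(e1 - e0) \<le> y * e1 \<Longrightarrow> (nr::real) > 0 \<Longrightarrow> y = ww * tt \<Longrightarrow> (e1 - e0) / nr \<le> tt * (ww * e1 / nr)"
  by (simp add: divide_right_mono mult.assoc mult.left_commute)

lemma cz_step: "cz n (\<lambda>j. L j + w j * tau) \<le> cz n L + 3 * tau"
proof -
  have nn: "real n > 0" using n1 by simp
  have "cz n (\<lambda>j. L j + w j * tau) - cz n L = (\<Sum>j<n. (exp (L j + w j * tau) - exp (L j)) / real n)"
    unfolding cz_def sum_subtractf[symmetric] diff_divide_distrib ..
  also have "\<dots> \<le> (\<Sum>j<n. tau * (w j * exp (L j + w j * tau) / real n))"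
  proof (intro sum_mono)
    fix j assume "j \<in> {..<n}" then have j: "j < n" by simp
    define y where "y = w j * tau"
    have y0: "y \<ge> 0" unfolding y_def using w0[OF j] by simp
    have "1 - y \<le> exp (- y)" using exp_ge_add_one_self[of "-y"] by simp
    then have "exp (L j + y) * (1 - y) \<le> exp (L j + y) * exp (- y)" by (intro mult_left_mono) auto
    also have "\<dots> = exp (L j)" by (simp add: exp_add[symmetric])
    finally have "exp (L j + y) - exp (L j) \<le> y * exp (L j + y)" by (simp add: algebra_simps)
    then show "(exp (L j + w j * tau) - exp (L j)) / real n \<le> tau * (w j * exp (L j + w j * tau) / real n)"
      unfolding y_def using nn by (rule aux1) simp
  qed
  also have "\<dots> = tau * Sf n w L tau" unfolding Sf_def by (simp add: sum_distrib_left)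
  also have "\<dots> \<le> tau * 3" using S_tau_le by (intro mult_left_mono) auto
  finally have h: "cz n (\<lambda>j. L j + w j * tau) - cz n L \<le> tau * 3" .
  then show ?thesis by (simp add: diff_le_eq mult.commute)
qed

end



datatype stt = St (sB: real) (sP: "nat \<Rightarrow> real") (sL: "nat \<Rightarrow> real") (sp: nat) (stime: real)

definition phv :: "nat \<Rightarrow> (nat \<Rightarrow> real) \<Rightarrow> real \<Rightarrow> (nat \<Rightarrow> real) \<Rightarrow> nat \<Rightarrow> real" where
  "phv n c B L = (\<lambda>j. B * exp (L j) / (real n * c j))"
definition Xq :: "nat \<Rightarrow> (nat \<Rightarrow> real) \<Rightarrow> stt \<Rightarrow> nat \<Rightarrow> real" where
  "Xq n c q = (\<lambda>j. sP q j + phv n c (sB q) (sL q) j)"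
definition Xof :: "nat \<Rightarrow> (nat \<Rightarrow> real) \<Rightarrow> stt option \<Rightarrow> nat \<Rightarrow> real" where
  "Xof n c s = (case s of None \<Rightarrow> (\<lambda>j. 0) | Some q \<Rightarrow> Xq n c q)"
definition wv :: "(nat \<Rightarrow> real) \<Rightarrow> real \<Rightarrow> (nat \<Rightarrow> real) \<Rightarrow> nat \<Rightarrow> real" where
  "wv c B r = (\<lambda>j. r j * B / c j)"
definition upd :: "nat \<Rightarrow> (nat \<Rightarrow> real) \<Rightarrow> (nat \<Rightarrow> real) \<Rightarrow> stt \<Rightarrow> stt" where
  "upd n c r q = (let w = wv c (sB q) r; t = real (kst n w (sL q)) / real n in
     St (sB q) (sP q) (\<lambda>j. sL q j + w j * t) (sp q) (stime q + t))"
definition pre :: "nat \<Rightarrow> (nat \<Rightarrow> real) \<Rightarrow> real \<Rightarrow> stt option \<Rightarrow> stt" where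
  "pre n c Ov s = (case s of None \<Rightarrow> St (2 * Ov) (\<lambda>j. 0) (\<lambda>j. 0) 1 0
     | Some q \<Rightarrow> (if sB q < Ov then St (2 * Ov) (Xq n c q) (\<lambda>j. 0) (Suc (sp q)) 0 else q))"
definition step :: "nat \<Rightarrow> (nat \<Rightarrow> real) \<Rightarrow> real \<Rightarrow> (nat \<Rightarrow> real) \<Rightarrow> stt option \<Rightarrow> stt option" where
  "step n c Ov r s = (let q = pre n c Ov s in
     if 1 \<le> (\<Sum>j<n. r j * Xq n c q j) then Some q else Some (upd n c r q))"

fun stf :: "nat \<Rightarrow> (nat \<Rightarrow> real) \<Rightarrow> (nat \<Rightarrow> nat \<Rightarrow> real) \<Rightarrow> nat \<Rightarrow> stt option" where
  "stf n c a 0 = None"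
| "stf n c a (Suc m) = step n c (OPT n c a (Suc m)) (a m) (stf n c a m)"

definition alg :: "nat \<Rightarrow> (nat \<Rightarrow> real) \<Rightarrow> (nat \<Rightarrow> real) list \<Rightarrow> nat \<Rightarrow> real" where
  "alg n c rs = Xof n c (stf n c (\<lambda>i. rs ! i) (length rs))"

lemma feasible_cong: "(\<And>i. i < m \<Longrightarrow> a' i = a i) \<Longrightarrow> feasible n a' m x = feasible n a m x"
  unfolding feasible_def by auto

lemma OPT_cong: "(\<And>i. i < m \<Longrightarrow> a' i = a i) \<Longrightarrow> OPT n c a' m = OPT n c a m"
  unfolding OPT_def using feasible_cong[of m a' a n] by simp

lemma stf_cong: "(\<And>i. i < m \<Longrightarrow> a' i = a i) \<Longrightarrow> stf n c a' m = stf n c a m"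
proof (induction m)
  case 0 then show ?case by simp
next
  case (Suc m)
  then show ?case using OPT_cong[of "Suc m" a' a n c] by simp
qed

lemma alg_eq: "alg n c (map a [0..<m]) = Xof n c (stf n c a m)"
proof -
  have "stf n c (\<lambda>i. map a [0..<m] ! i) m = stf n c a m"
    by (rule stf_cong) simp
  then show ?thesis unfolding alg_def by simp
qed

lemma sum_phv: "(\<Sum>j<n. r j * phv n c B (\<lambda>j. L j + wv c B r j * u) j) = Sf n (wv c B r) L u"
  unfolding Sf_def phv_def wv_def by (intro sum.cong refl) (simp add: ac_simps)

lemma sum_phv0: "(\<Sum>j<n. r j * phv n c B L j) = Sf n (wv c B r) L 0"
  unfolding Sf_def phv_def wv_def by (intro sum.cong refl) (simp add: ac_simps)

context inst begin

lemma cost_phv: "cost n c (phv n c B L) = B * cz n L"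
  unfolding cost_def phv_def cz_def sum_distrib_left
proof (intro sum.cong refl)
  fix j assume "j \<in> {..<n}" then have "c j > 0" by (simp add: cpos)
  then show "c j * (B * exp (L j) / (real n * c j)) = B * (exp (L j) / real n)" by simp
qed

lemma cost_add: "cost n c (\<lambda>j. x j + y j) = cost n c x + cost n c y"
  unfolding cost_def by (simp add: distrib_left sum.distrib)

lemma phv_nonneg: "B \<ge> 0 \<Longrightarrow> j < n \<Longrightarrow> phv n c B L j \<ge> 0"
proof -
  assume "B \<ge> 0" "j < n"
  then have "c j > 0" "real n > 0" using cpos n1 by auto
  then show ?thesis unfolding phv_def using \<open>B \<ge> 0\<close> by (simp add: divide_nonneg_pos)
qed

end



context inst begin

abbreviation "Tm \<equiv> 4 * ln (real n) + 41"

definition InvG :: "real \<Rightarrow> nat \<Rightarrow> stt \<Rightarrow> bool" where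
  "InvG Ov m q \<longleftrightarrow> 0 < sB q \<and> Ov \<le> sB q \<and> sB q \<le> 2 * Ov
   \<and> (\<forall>j<n. sP q j \<ge> 0 \<and> sL q j \<ge> 0)
   \<and> cost n c (sP q) \<le> 124 * (1 + ln (real n)) * sB q
   \<and> cz n (sL q) \<le> 1 + 3 * stime q \<and> stime q \<ge> 0
   \<and> (\<forall>x. feasible n a m x \<longrightarrow> stime q \<le> (\<Sum>j<n. c j * x j / sB q * sL q j))
   \<and> sp q \<ge> 1 \<and> 2 ^ (sp q) * alpha1 n c a \<le> sB q
   \<and> feasible n a m (Xq n c q)"

abbreviation "Inv m q \<equiv> InvG (OPT n c a m) m q"

lemma tbound: assumes "Inv m q" shows "stime q \<le> Tm"
proof -
  define B t L where "B = sB q" "t = stime q" "L = sL q"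
  have B0: "B > 0" and OB: "OPT n c a m \<le> B" and L0: "\<And>j. j < n \<Longrightarrow> L j \<ge> 0"
    and czb: "cz n L \<le> 1 + 3 * t" and t0: "t \<ge> 0"
    and tx: "\<And>x. feasible n a m x \<Longrightarrow> t \<le> (\<Sum>j<n. c j * x j / B * L j)"
    using assms unfolding InvG_def B_t_L_def by auto
  obtain x where x: "feasible n a m x" "cost n c x < 2 * B"
    using OPT_witness[of m "2 * B"] OB B0 by auto
  have x0: "\<And>j. j < n \<Longrightarrow> x j \<ge> 0" using x(1) unfolding feasible_def by auto
  have nn: "real n > 0" using n1 by simp
  define Z where "Z = (\<Sum>j<n. exp (L j))"
  have Zcz: "Z = real n * cz n L" unfolding Z_def cz_def sum_distrib_left using nn
    by (intro sum.cong refl) simp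
  have eZ: "\<And>j. j < n \<Longrightarrow> exp (L j) \<le> Z" unfolding Z_def by (intro member_le_sum) auto
  have n0: "0 < n" using n1 by simp
  have "exp (L 0) \<ge> 1" using L0[OF n0] by simp
  then have Z1: "Z \<ge> 1" using eZ[OF n0] by linarith
  have LZ: "\<And>j. j < n \<Longrightarrow> L j \<le> ln Z"
  proof -
    fix j assume j: "j < n"
    have "L j = ln (exp (L j))" by simp
    also have "\<dots> \<le> ln Z" using eZ[OF j] Z1 by (subst ln_le_cancel_iff) auto
    finally show "L j \<le> ln Z" .
  qed
  have lnZ0: "ln Z \<ge> 0" using Z1 by simp
  have "t \<le> (\<Sum>j<n. c j * x j / B * L j)" using tx[OF x(1)] .
  also have "\<dots> \<le> (\<Sum>j<n. c j * x j / B * ln Z)"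
  proof (intro sum_mono)
    fix j assume "j \<in> {..<n}" then have j: "j < n" by simp
    have "c j * x j / B \<ge> 0" using cpos[OF j] x0[OF j] B0 by simp
    then show "c j * x j / B * L j \<le> c j * x j / B * ln Z" by (rule mult_left_mono[OF LZ[OF j]])
  qed
  also have "\<dots> = cost n c x / B * ln Z" unfolding cost_def
    by (simp add: sum_distrib_right sum_divide_distrib)
  also have "\<dots> \<le> 2 * ln Z"
  proof -
    have "cost n c x / B \<le> 2" using x(2) B0 by (simp add: divide_le_eq)
    then show ?thesis using lnZ0 by (rule mult_right_mono)
  qed
  finally have t1: "t \<le> 2 * ln Z" .
  have cz0: "cz n L > 0" unfolding cz_def using n0 nn by (intro sum_pos) auto
  have "ln Z = ln (real n) + ln (cz n L)" unfolding Zcz using nn cz0 by (simp add: ln_mult)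
  also have "ln (cz n L) \<le> ln (1 + 3 * t)" using cz0 czb by (subst ln_le_cancel_iff) auto
  finally have t2: "ln Z \<le> ln (real n) + ln (1 + 3 * t)" by simp
  have "ln ((1 + 3 * t) / 12) \<le> (1 + 3 * t) / 12 - 1" using t0 by (intro ln_le_minus_one) auto
  moreover have "ln ((1 + 3 * t) / 12) = ln (1 + 3 * t) - ln 12" using t0 by (simp add: ln_div)
  moreover have "ln (12::real) \<le> 12 - 1" by (intro ln_le_minus_one) auto
  ultimately have "ln (1 + 3 * t) \<le> (1 + 3 * t) / 12 + 10" by linarith
  moreover have "(1 + 3 * t) / 12 = 1 / 12 + t / 4" by (simp add: field_simps)
  ultimately have "t \<le> 4 * ln (real n) + 41" using t1 t2 by linarith
  then show ?thesis unfolding B_t_L_def .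
qed


lemma feas_up: "feasible n a m x \<Longrightarrow> (\<And>j. j < n \<Longrightarrow> x j \<le> y j) \<Longrightarrow> feasible n a m y"
  unfolding feasible_def
proof (intro conjI allI impI; elim conjE)
  fix j assume "\<forall>j<n. 0 \<le> x j" "\<And>j. j < n \<Longrightarrow> x j \<le> y j" "j < n"
  then show "0 \<le> y j" by (meson order_trans)
next
  fix i assume h: "\<forall>i<m. 1 \<le> (\<Sum>j<n. a i j * x j)" "\<And>j. j < n \<Longrightarrow> x j \<le> y j" "i < m"
  have "(\<Sum>j<n. a i j * x j) \<le> (\<Sum>j<n. a i j * y j)"
    by (intro sum_mono mult_left_mono) (auto simp: h(2) anneg)
  then show "1 \<le> (\<Sum>j<n. a i j * y j)" using h by force
qed

lemma feas_Suc: "feasible n a (Suc m) y \<longleftrightarrow> feasible n a m y \<and> 1 \<le> (\<Sum>j<n. a m j * y j)"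
  unfolding feasible_def by (auto simp: less_Suc_eq)

lemma phv_mono: "B > 0 \<Longrightarrow> j < n \<Longrightarrow> L j \<le> L' j \<Longrightarrow> phv n c B L j \<le> phv n c B L' j"
proof -
  assume h: "B > 0" "j < n" "L j \<le> L' j"
  then have "c j > 0" "real n > 0" using cpos n1 by auto
  then show ?thesis unfolding phv_def using h
    by (intro divide_right_mono mult_left_mono) (auto intro!: mult_nonneg_nonneg)
qed

lemma fin_sat:
  assumes I: "InvG (OPT n c a (Suc m)) m q" and sat: "1 \<le> (\<Sum>j<n. a m j * Xq n c q j)"
  shows "Inv (Suc m) q"
proof -
  have f: "feasible n a (Suc m) (Xq n c q)" using I sat unfolding feas_Suc InvG_def by auto
  have "\<forall>x. feasible n a (Suc m) x \<longrightarrow> stime q \<le> (\<Sum>j<n. c j * x j / sB q * sL q j)"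
    using I feas_mono unfolding InvG_def by blast
  then show ?thesis using I f unfolding InvG_def by auto
qed

lemma fin_upd:
  assumes I: "InvG (OPT n c a (Suc m)) m q" and uns: "\<not> 1 \<le> (\<Sum>j<n. a m j * Xq n c q j)"
  defines "q' \<equiv> upd n c (a m) q"
  shows "Inv (Suc m) q'" "\<And>j. j < n \<Longrightarrow> Xq n c q j \<le> Xq n c q' j"
    "stime q' \<ge> stime q + 1 / real n" "sp q' = sp q"
proof -
  define B P L t r where "B = sB q" "P = sP q" "L = sL q" "t = stime q" "r = a m"
  define w where "w = wv c B r"
  have B0: "B > 0" and P0: "\<And>j. j < n \<Longrightarrow> P j \<ge> 0" and L0: "\<And>j. j < n \<Longrightarrow> L j \<ge> 0"
    and czb: "cz n L \<le> 1 + 3 * t" and t0: "t \<ge> 0"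
    and tx: "\<And>x. feasible n a m x \<Longrightarrow> t \<le> (\<Sum>j<n. c j * x j / B * L j)"
    and fm: "feasible n a m (Xq n c q)"
    using I unfolding InvG_def B_P_L_t_r_def by auto
  have nn: "real n > 0" using n1 by simp
  have r0: "\<And>j. j < n \<Longrightarrow> r j \<ge> 0" unfolding B_P_L_t_r_def by (rule anneg)
  have w0: "\<And>j. j < n \<Longrightarrow> w j \<ge> 0" unfolding w_def wv_def using r0 B0 cpos
    by (simp add: less_imp_le)
  have wpos: "\<exists>j<n. w j > 0"
  proof -
    obtain j where "j < n" "r j > 0" using apos unfolding B_P_L_t_r_def by blast
    then show ?thesis unfolding w_def wv_def using B0 cpos[of j] by (intro exI[of _ j]) simp
  qed
  have Xqe: "Xq n c q = (\<lambda>j. P j + phv n c B L j)" unfolding Xq_def B_P_L_t_r_def ..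
  have "Sf n w L 0 = (\<Sum>j<n. r j * phv n c B L j)" unfolding w_def by (rule sum_phv0[symmetric])
  also have "\<dots> \<le> (\<Sum>j<n. r j * Xq n c q j)" unfolding Xqe
    by (intro sum_mono mult_left_mono) (auto simp: r0 P0)
  finally have S0: "Sf n w L 0 < 1" using uns unfolding B_P_L_t_r_def by simp
  interpret sfl n w L using n1 w0 L0 wpos S0 by unfold_locales auto
  define L' where "L' = (\<lambda>j. L j + w j * tau)"
  have q'e: "q' = St B P L' (sp q) (t + tau)"
    unfolding q'_def upd_def B_P_L_t_r_def L'_def w_def B_P_L_t_r_def Let_def by simp
  have LL': "\<And>j. j < n \<Longrightarrow> L j \<le> L' j" unfolding L'_def using w0 by simp
  have Xq': "Xq n c q' = (\<lambda>j. P j + phv n c B L' j)" unfolding Xq_def q'e by simp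
  show mono: "\<And>j. j < n \<Longrightarrow> Xq n c q j \<le> Xq n c q' j"
  proof -
    fix j assume j: "j < n"
    show "Xq n c q j \<le> Xq n c q' j" unfolding Xqe Xq' using phv_mono[of B j L L', OF B0 j LL'[OF j]] by simp
  qed
  show "stime q' \<ge> stime q + 1 / real n" using tau_ge unfolding q'e B_P_L_t_r_def by simp
  show "sp q' = sp q" unfolding q'e by simp
  have "1 \<le> Sf n w L tau" by (rule k_prop)
  also have "Sf n w L tau = (\<Sum>j<n. r j * phv n c B L' j)" unfolding L'_def w_def by (rule sum_phv[symmetric])
  also have "\<dots> \<le> (\<Sum>j<n. r j * Xq n c q' j)" unfolding Xq'
    by (intro sum_mono mult_left_mono) (auto simp: r0 P0)
  finally have rowm: "1 \<le> (\<Sum>j<n. a m j * Xq n c q' j)" unfolding B_P_L_t_r_def .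
  have fS: "feasible n a (Suc m) (Xq n c q')" unfolding feas_Suc
    using feas_up[OF fm mono] rowm by simp
  have czb': "cz n L' \<le> 1 + 3 * (t + tau)" using cz_step czb unfolding L'_def by simp
  have tx': "\<And>x. feasible n a (Suc m) x \<Longrightarrow> t + tau \<le> (\<Sum>j<n. c j * x j / B * L' j)"
  proof -
    fix x assume fx: "feasible n a (Suc m) x"
    then have x1: "1 \<le> (\<Sum>j<n. r j * x j)" unfolding feas_Suc B_P_L_t_r_def by simp
    have "(\<Sum>j<n. c j * x j / B * L' j) = (\<Sum>j<n. c j * x j / B * L j) + tau * (\<Sum>j<n. r j * x j)"
      unfolding L'_def sum_distrib_left sum.distrib[symmetric]
    proof (intro sum.cong refl)
      fix j assume "j \<in> {..<n}" then have cj: "c j > 0" using cpos by simp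
      show "c j * x j / B * (L j + w j * tau) = c j * x j / B * L j + tau * (r j * x j)"
        unfolding w_def wv_def using cj B0 by (simp add: field_simps)
    qed
    moreover have "t \<le> (\<Sum>j<n. c j * x j / B * L j)" using tx feas_mono[OF fx] by blast
    moreover have "tau * 1 \<le> tau * (\<Sum>j<n. r j * x j)" by (rule mult_left_mono[OF x1 tau_nonneg])
    ultimately show "t + tau \<le> (\<Sum>j<n. c j * x j / B * L' j)" by linarith
  qed
  have L'0: "\<And>j. j < n \<Longrightarrow> L' j \<ge> 0" using LL' L0 by (meson order_trans)
  show "Inv (Suc m) q'" using I fS czb' tx' L'0 t0 tau_nonneg
    unfolding InvG_def q'e B_P_L_t_r_def by auto
qed


lemma cz_zero: "cz n (\<lambda>j. 0) = 1"
  unfolding cz_def using n1 by simp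

lemma ln_n0: "ln (real n) \<ge> 0" using n1 by simp

lemma Xq_nonneg: "sB q \<ge> 0 \<Longrightarrow> (\<And>j. j < n \<Longrightarrow> sP q j \<ge> 0) \<Longrightarrow> j < n \<Longrightarrow> Xq n c q j \<ge> 0"
  unfolding Xq_def using phv_nonneg[of "sB q" j "sL q"] by force

lemma pre_none:
  defines "q0 \<equiv> pre n c (OPT n c a (Suc 0)) None"
  shows "InvG (OPT n c a (Suc 0)) 0 q0" "sp q0 = 1" "stime q0 = 0"
    "\<And>j. j < n \<Longrightarrow> Xq n c q0 j \<ge> 0"
proof -
  define O1 where "O1 = OPT n c a (Suc 0)"
  have O1: "O1 > 0" "alpha1 n c a \<le> O1" unfolding O1_def using OPT_pos OPT_ge_alpha by auto
  have q0e: "q0 = St (2 * O1) (\<lambda>j. 0) (\<lambda>j. 0) 1 0" unfolding q0_def pre_def O1_def by simp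
  show X0: "\<And>j. j < n \<Longrightarrow> Xq n c q0 j \<ge> 0" using Xq_nonneg O1 unfolding q0e by simp
  have f: "feasible n a 0 (Xq n c q0)" unfolding feasible_def using X0 by simp
  have c0: "0 \<le> 124 * (1 + ln (real n)) * (2 * O1)" using ln_n0 O1 by simp
  show "InvG (OPT n c a (Suc 0)) 0 q0" unfolding InvG_def O1_def[symmetric] using O1 f c0
    by (simp add: q0e cz_zero cost_def)
  show "sp q0 = 1" "stime q0 = 0" unfolding q0e by simp_all
qed

lemma pre_keep:
  assumes I: "Inv m q" and nt: "\<not> sB q < OPT n c a (Suc m)"
  shows "InvG (OPT n c a (Suc m)) m q"
proof -
  have "sB q \<le> 2 * OPT n c a (Suc m)" using I OPT_mono[of m] unfolding InvG_def by linarith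
  then show ?thesis using I nt unfolding InvG_def by auto
qed

lemma pre_trans:
  assumes I: "Inv m q" and tr: "sB q < OPT n c a (Suc m)"
  defines "q0 \<equiv> pre n c (OPT n c a (Suc m)) (Some q)"
  shows "InvG (OPT n c a (Suc m)) m q0" "sp q0 = Suc (sp q)" "stime q0 = 0"
    "\<And>j. j < n \<Longrightarrow> Xq n c q j \<le> Xq n c q0 j"
proof -
  define O1 B where "O1 = OPT n c a (Suc m)" "B = sB q"
  have q0e: "q0 = St (2 * O1) (Xq n c q) (\<lambda>j. 0) (Suc (sp q)) 0"
    unfolding q0_def pre_def O1_B_def using tr by simp
  have B0: "B > 0" and BO: "B < O1" and P0: "\<And>j. j < n \<Longrightarrow> sP q j \<ge> 0"
    and cP: "cost n c (sP q) \<le> 124 * (1 + ln (real n)) * B"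
    and czb: "cz n (sL q) \<le> 1 + 3 * stime q" and spb: "2 ^ (sp q) * alpha1 n c a \<le> B"
    and fm: "feasible n a m (Xq n c q)"
    using I tr unfolding InvG_def O1_B_def by auto
  have tb: "stime q \<le> Tm" using tbound[OF I] .
  show X: "\<And>j. j < n \<Longrightarrow> Xq n c q j \<le> Xq n c q0 j"
  proof -
    fix j assume j: "j < n"
    have "phv n c (2 * O1) (\<lambda>j. 0) j \<ge> 0" using phv_nonneg[OF _ j] B0 BO by simp
    then show "Xq n c q j \<le> Xq n c q0 j" unfolding q0e Xq_def[of n c "St _ _ _ _ _"] by simp
  qed
  have X0: "\<And>j. j < n \<Longrightarrow> Xq n c q j \<ge> 0" using Xq_nonneg[of q] B0 P0 unfolding O1_B_def by simp
  have cX: "cost n c (Xq n c q) \<le> 124 * (1 + ln (real n)) * (2 * O1)"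
  proof -
    have "cost n c (Xq n c q) = cost n c (sP q) + B * cz n (sL q)"
      unfolding Xq_def cost_add cost_phv O1_B_def ..
    also have "\<dots> \<le> 124 * (1 + ln (real n)) * B + B * (124 * (1 + ln (real n)))"
    proof -
      have e: "124 * (1 + ln (real n)) = 124 + 124 * ln (real n)" by simp
      have "cz n (sL q) \<le> 124 * (1 + ln (real n))" unfolding e using czb tb ln_n0 by linarith
      then have "B * cz n (sL q) \<le> B * (124 * (1 + ln (real n)))" using B0 by simp
      then show ?thesis using cP by linarith
    qed
    also have "\<dots> = 124 * (1 + ln (real n)) * (2 * B)" by simp
    also have "\<dots> \<le> 124 * (1 + ln (real n)) * (2 * O1)" using BO ln_n0 by simp
    finally show ?thesis .
  qed
  have f: "feasible n a m (Xq n c q0)" using feas_up[OF fm X] .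
  have sp2: "2 ^ Suc (sp q) * alpha1 n c a \<le> 2 * O1" using spb BO by simp
  show "InvG (OPT n c a (Suc m)) m q0" unfolding InvG_def O1_B_def(1)[symmetric]
    using B0 BO f X0 cX sp2 by (simp add: q0e cz_zero)
  show "sp q0 = Suc (sp q)" "stime q0 = 0" unfolding q0e by simp_all
qed


abbreviation "Xs m \<equiv> Xof n c (stf n c a m)"
abbreviation "chg i \<equiv> (\<exists>j<n. Xs i j \<noteq> Xs (Suc i) j)"
abbreviation "cnt m \<equiv> card {i. i < m \<and> chg i}"
abbreviation "bnd q \<equiv> (real (sp q) - 1) * (1 + real n * Tm) + 1 + real n * stime q"

lemma cnt_Suc: "real (cnt (Suc m)) \<le> real (cnt m) + (if chg m then 1 else 0)"
proof -
  have e: "{i. i < Suc m \<and> chg i} = {i. i < m \<and> chg i} \<union> (if chg m then {m} else {})"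
    by (auto simp: less_Suc_eq)
  have h: "cnt (Suc m) \<le> cnt m + card (if chg m then {m} else {})"
    unfolding e by (rule card_Un_le)
  then show ?thesis
  proof (cases "chg m")
    case True
    then show ?thesis using h by simp
  next
    case False
    then have "(if chg m then {m} else {}) = {}" by (simp only: if_False)
    then show ?thesis using h False by (simp only: if_False card.empty)
  qed
qed

lemma Tm_pos: "1 + real n * Tm \<ge> 1" using ln_n0 by simp

lemma pre_summary:
  assumes H: "m = 0 \<or> (\<exists>q. stf n c a m = Some q \<and> Inv m q \<and> real (cnt m) \<le> bnd q)"
  defines "q0 \<equiv> pre n c (OPT n c a (Suc m)) (stf n c a m)"
  shows "InvG (OPT n c a (Suc m)) m q0 \<and> (\<forall>j<n. Xs m j \<le> Xq n c q0 j) \<and>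
    real (cnt m) + (if (\<exists>j<n. Xs m j \<noteq> Xq n c q0 j) then 1 else 0) \<le> bnd q0"
proof (cases "m = 0")
  case True
  then have q0e: "q0 = pre n c (OPT n c a (Suc 0)) None" unfolding q0_def by simp
  note P = pre_none[folded q0e]
  have "Xs m = (\<lambda>j. 0)" using True by (simp add: Xof_def)
  then show ?thesis using P True by simp
next
  case False
  then obtain q where sq: "stf n c a m = Some q" and I: "Inv m q" and cb: "real (cnt m) \<le> bnd q"
    using H by blast
  have Xm: "Xs m = Xq n c q" using sq by (simp add: Xof_def)
  show ?thesis
  proof (cases "sB q < OPT n c a (Suc m)")
    case True
    have q0e: "q0 = pre n c (OPT n c a (Suc m)) (Some q)" unfolding q0_def sq ..
    note P = pre_trans[OF I True, folded q0e]
    have tb: "stime q \<le> Tm" by (rule tbound[OF I])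
    have t0: "stime q \<ge> 0" using I unfolding InvG_def by simp
    have sp1: "sp q \<ge> 1" using I unfolding InvG_def by simp
    have "real (cnt m) + 1 \<le> (real (sp q) - 1) * (1 + real n * Tm) + 1 + real n * Tm + 1"
      using cb tb by (smt (verit) mult_left_mono of_nat_0_le_iff)
    also have "\<dots> = (real (sp q0) - 1) * (1 + real n * Tm) + 1 + real n * stime q0"
      using P(2,3) by (simp add: algebra_simps)
    finally have "real (cnt m) + (if (\<exists>j<n. Xs m j \<noteq> Xq n c q0 j) then 1 else 0) \<le> bnd q0"
      by (simp split: if_split)
    then show ?thesis using P(1,4) unfolding Xm by simp
  next
    case False
    have q0e: "q0 = q" unfolding q0_def sq pre_def using False by simp
    show ?thesis using pre_keep[OF I False] cb unfolding q0e Xm by simp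
  qed
qed

lemma main_step:
  assumes H: "m = 0 \<or> (\<exists>q. stf n c a m = Some q \<and> Inv m q \<and> real (cnt m) \<le> bnd q)"
  shows "\<exists>q'. stf n c a (Suc m) = Some q' \<and> Inv (Suc m) q' \<and> real (cnt (Suc m)) \<le> bnd q'
     \<and> (\<forall>j<n. Xs m j \<le> Xs (Suc m) j)"
proof -
  define q0 where "q0 = pre n c (OPT n c a (Suc m)) (stf n c a m)"
  have S: "InvG (OPT n c a (Suc m)) m q0" "\<forall>j<n. Xs m j \<le> Xq n c q0 j"
    "real (cnt m) + (if (\<exists>j<n. Xs m j \<noteq> Xq n c q0 j) then 1 else 0) \<le> bnd q0"
    using pre_summary[OF H] unfolding q0_def by auto
  have stS: "stf n c a (Suc m) = step n c (OPT n c a (Suc m)) (a m) (stf n c a m)" by simp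
  show ?thesis
  proof (cases "1 \<le> (\<Sum>j<n. a m j * Xq n c q0 j)")
    case True
    have st: "stf n c a (Suc m) = Some q0" unfolding stS step_def Let_def q0_def[symmetric] using True by simp
    have XS: "Xs (Suc m) = Xq n c q0" using st by (simp add: Xof_def)
    have "real (cnt (Suc m)) \<le> bnd q0" using cnt_Suc[of m] S(3) unfolding XS by linarith
    then show ?thesis using fin_sat[OF S(1) True] st S(2) XS by simp
  next
    case False
    define q' where "q' = upd n c (a m) q0"
    have st: "stf n c a (Suc m) = Some q'" unfolding stS step_def Let_def q0_def[symmetric] q'_def using False by simp
    have XS: "Xs (Suc m) = Xq n c q'" using st by (simp add: Xof_def)
    note F = fin_upd[OF S(1) False, folded q'_def]
    have nt: "real n * stime q' \<ge> real n * stime q0 + 1"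
    proof -
      have "real n * stime q' \<ge> real n * (stime q0 + 1 / real n)" using F(3) by (simp add: mult_left_mono)
      then show ?thesis using n1 by (simp add: distrib_left)
    qed
    have "real (cnt (Suc m)) \<le> real (cnt m) + 1" using cnt_Suc[of m] by (simp split: if_split_asm)
    also have "\<dots> \<le> bnd q0 + 1" using S(3) by (simp split: if_split_asm)
    also have "\<dots> \<le> bnd q'" using nt F(4) by simp
    finally have cb: "real (cnt (Suc m)) \<le> bnd q'" .
    have mono: "\<forall>j<n. Xs m j \<le> Xs (Suc m) j" unfolding XS using S(2) F(2) by (meson order_trans)
    show ?thesis using F(1) st cb mono by simp
  qed
qed

lemma main_inv: "m \<ge> 1 \<Longrightarrow> \<exists>q. stf n c a m = Some q \<and> Inv m q \<and> real (cnt m) \<le> bnd q"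
proof (induction m)
  case 0 then show ?case by simp
next
  case (Suc m)
  have "m = 0 \<or> (\<exists>q. stf n c a m = Some q \<and> Inv m q \<and> real (cnt m) \<le> bnd q)"
    using Suc.IH by (cases m) auto
  then show ?case using main_step by blast
qed

lemma main_mono: "j < n \<Longrightarrow> Xs m j \<le> Xs (Suc m) j"
proof -
  assume j: "j < n"
  have "m = 0 \<or> (\<exists>q. stf n c a m = Some q \<and> Inv m q \<and> real (cnt m) \<le> bnd q)"
    using main_inv[of m] by (cases m) auto
  then show ?thesis using main_step j by blast
qed

end



lemma ln2_ge: "ln (2::real) \<ge> 1 / 2"
proof -
  have "exp (- (1/2::real)) \<ge> 1 + (- (1/2))" by (rule exp_ge_add_one_self)
  then have h1: "exp (-(1/2::real)) \<ge> 1/2" by simp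
  have h2: "exp (1/2::real) * exp (-(1/2)) = 1" by (simp add: exp_add[symmetric])
  have "exp (1/2::real) * (1/2) \<le> exp (1/2) * exp (-(1/2))"
    by (rule mult_left_mono[OF h1]) simp
  then have "exp (1/2::real) \<le> 2" using h2 by simp
  then have "ln (exp (1/2::real)) \<le> ln 2" by (subst ln_le_cancel_iff) auto
  then show ?thesis by simp
qed

lemma lin1: fixes s x u v nn :: real shows "s \<le> 1 + 2 * x \<Longrightarrow> x \<le> u + v \<Longrightarrow> 1 \<le> nn \<Longrightarrow> s \<le> 2 * (nn + u + v + 1)"
  by (smt (verit))

context inst begin

lemma final_cost: assumes I: "Inv m q" shows "cost n c (Xq n c q) \<le> 496 * (1 + ln (real n)) * OPT n c a m"
proof -
  define B where "B = sB q"
  have B0: "B > 0" and B2: "B \<le> 2 * OPT n c a m" and cP: "cost n c (sP q) \<le> 124 * (1 + ln (real n)) * B"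
    and czb: "cz n (sL q) \<le> 1 + 3 * stime q"
    using I unfolding InvG_def B_def by auto
  have tb: "stime q \<le> Tm" by (rule tbound[OF I])
  have "cost n c (Xq n c q) = cost n c (sP q) + B * cz n (sL q)"
    unfolding Xq_def cost_add cost_phv B_def ..
  also have "\<dots> \<le> 124 * (1 + ln (real n)) * B + B * (124 * (1 + ln (real n)))"
  proof -
    have e: "124 * (1 + ln (real n)) = 124 + 124 * ln (real n)" by simp
    have "cz n (sL q) \<le> 124 * (1 + ln (real n))" unfolding e using czb tb ln_n0 by linarith
    then have "B * cz n (sL q) \<le> B * (124 * (1 + ln (real n)))" using B0 by simp
    then show ?thesis using cP by linarith
  qed
  also have "\<dots> = 248 * (1 + ln (real n)) * B" by simp
  also have "\<dots> \<le> 248 * (1 + ln (real n)) * (2 * OPT n c a m)" using B2 ln_n0 by simp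
  also have "\<dots> = 496 * (1 + ln (real n)) * OPT n c a m" by simp
  finally show ?thesis .
qed

lemma final_count: assumes I: "Inv m q" and cb: "(xc::real) \<le> bnd q" and m1: "m \<ge> 1"
  shows "xc \<le> 84 * (real n + \<bar>ln (OPT n c a m)\<bar> + \<bar>ln (1 / alpha1 n c a)\<bar> + 1) ^ 3"
proof -
  define O1 al W where "O1 = OPT n c a m" "al = alpha1 n c a"
    "W = real n + \<bar>ln (OPT n c a m)\<bar> + \<bar>ln (1 / alpha1 n c a)\<bar> + 1"
  have tb: "stime q \<le> Tm" by (rule tbound[OF I])
  have sp1: "sp q \<ge> 1" and spb: "2 ^ (sp q) * al \<le> sB q" and B2: "sB q \<le> 2 * O1"
    using I unfolding InvG_def O1_al_W_def by auto
  have al0: "al > 0" unfolding O1_al_W_def by (rule alpha_pos)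
  have O0: "O1 > 0" using OPT_pos[OF m1] O1_al_W_def(1) by simp
  have nn: "real n \<ge> 1" using n1 by simp
  have T0: "1 + real n * Tm \<ge> 0" using Tm_pos by linarith
  have c1: "xc \<le> real (sp q) * (1 + real n * Tm)"
  proof -
    have "real n * stime q \<le> real n * Tm" using tb by (simp add: mult_left_mono)
    moreover have "(real (sp q) - 1) * (1 + real n * Tm) + 1 + real n * Tm = real (sp q) * (1 + real n * Tm)"
      by (simp add: algebra_simps)
    ultimately show ?thesis using cb by linarith
  qed
  have "ln (2 ^ (sp q) * al) \<le> ln (2 * O1)" using spb B2 al0 O0 by (subst ln_le_cancel_iff) auto
  then have "real (sp q) * ln 2 + ln al \<le> ln 2 + ln O1" using al0 O0
    by (simp add: ln_mult ln_realpow)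
  then have A1: "(real (sp q) - 1) * ln 2 \<le> ln O1 - ln al" by (simp add: algebra_simps)
  have A2: "(real (sp q) - 1) * (1/2) \<le> (real (sp q) - 1) * ln 2"
    using sp1 ln2_ge by (intro mult_left_mono) auto
  have A3: "(real (sp q) - 1) * (1/2) \<le> ln O1 - ln al" using order_trans[OF A2 A1] .
  have A4: "ln (1 / al) = - ln al" using al0 by (simp add: ln_div)
  have sp2: "real (sp q) \<le> 1 + 2 * (ln O1 + ln (1 / al))" unfolding A4 using A3 by simp
  have ab: "ln O1 + ln (1 / al) \<le> \<bar>ln O1\<bar> + \<bar>ln (1 / al)\<bar>" by (intro add_mono abs_ge_self)
  have We: "W = real n + \<bar>ln O1\<bar> + \<bar>ln (1 / al)\<bar> + 1" unfolding O1_al_W_def ..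
  have spW: "real (sp q) \<le> 2 * W" unfolding We by (rule lin1[OF sp2 ab nn])
  have "real n * ln (real n) \<le> real n * (real n - 1)" using nn ln_le_minus_one[of "real n"]
    by (intro mult_left_mono) auto
  moreover have "real n \<le> real n * real n" using nn by simp
  moreover have "real n * Tm = 4 * (real n * ln (real n)) + 41 * real n" by (simp add: algebra_simps)
  moreover have "real n ^ 2 = real n * real n" by (simp add: power2_eq_square)
  moreover have "real n * (real n - 1) = real n * real n - real n" by (simp add: algebra_simps)
  ultimately have c2: "1 + real n * Tm \<le> 42 * real n ^ 2" using nn by linarith
  have nW: "real n \<le> W" unfolding We by simp
  have W0: "W \<ge> 0" using nW nn by simp
  have "real (sp q) * (1 + real n * Tm) \<le> (2 * W) * (42 * real n ^ 2)"
    by (rule mult_mono[OF spW c2]) (use W0 T0 in auto)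
  then have "xc \<le> (2 * W) * (42 * real n ^ 2)" using c1 by linarith
  also have "\<dots> \<le> (2 * W) * (42 * W ^ 2)"
    using nW nn W0 by (intro mult_left_mono) (auto intro!: power_mono)
  also have "\<dots> = 84 * W ^ 3" by (simp add: power2_eq_square power3_eq_cube)
  finally show ?thesis unfolding O1_al_W_def .
qed

end

lemma main_all:
  fixes n :: nat and c :: "nat \<Rightarrow> real" and a :: "nat \<Rightarrow> nat \<Rightarrow> real"
  assumes h: "(1::nat) \<le> n" "\<forall>j<n. 0 < c j" "\<forall>i. (\<forall>j<n. 0 \<le> a i j) \<and> (\<exists>j<n. 0 < a i j)"
  shows "let X = (\<lambda>m. alg n c (map a [0..<m])) in
         (\<forall>j<n. X 0 j = 0)
       \<and> (\<forall>m. \<forall>j<n. X m j \<le> X (Suc m) j)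
       \<and> (\<forall>m. feasible n a m (X m))
       \<and> (\<forall>m\<ge>1. cost n c (X m) \<le> 496 * (1 + ln (real n)) * OPT n c a m)
       \<and> (\<forall>m\<ge>1. real (card {i. i < m \<and> (\<exists>j<n. X i j \<noteq> X (Suc i) j)})
                 \<le> 84 * (real n + \<bar>ln (OPT n c a m)\<bar> + \<bar>ln (1 / alpha1 n c a)\<bar> + 1) ^ 3)"
proof -
  interpret inst n c a using h by unfold_locales auto
  have XE: "(\<lambda>m. alg n c (map a [0..<m])) = (\<lambda>m. Xs m)" using alg_eq by auto
  have c1: "\<forall>j<n. Xs 0 j = 0" by (simp add: Xof_def)
  have c2: "\<forall>m. \<forall>j<n. Xs m j \<le> Xs (Suc m) j" using main_mono by blast
  have c3: "\<forall>m. feasible n a m (Xs m)"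
  proof
    fix m show "feasible n a m (Xs m)"
    proof (cases "m = 0")
      case True then show ?thesis unfolding feasible_def by (simp add: Xof_def)
    next
      case False
      then obtain q where "stf n c a m = Some q" "Inv m q" using main_inv[of m] by auto
      then show ?thesis unfolding InvG_def by (simp add: Xof_def)
    qed
  qed
  have c4: "\<forall>m\<ge>1. cost n c (Xs m) \<le> 496 * (1 + ln (real n)) * OPT n c a m"
  proof (intro allI impI)
    fix m :: nat assume "m \<ge> 1"
    then obtain q where "stf n c a m = Some q" "Inv m q" using main_inv[of m] by auto
    then show "cost n c (Xs m) \<le> 496 * (1 + ln (real n)) * OPT n c a m"
      using final_cost by (simp add: Xof_def)
  qed
  have c5: "\<forall>m\<ge>1. real (cnt m) \<le> 84 * (real n + \<bar>ln (OPT n c a m)\<bar> + \<bar>ln (1 / alpha1 n c a)\<bar> + 1) ^ 3"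
  proof (intro allI impI)
    fix m :: nat assume m1: "m \<ge> 1"
    then obtain q where "stf n c a m = Some q" "Inv m q" "real (cnt m) \<le> bnd q" using main_inv[of m] by auto
    then show "real (cnt m) \<le> 84 * (real n + \<bar>ln (OPT n c a m)\<bar> + \<bar>ln (1 / alpha1 n c a)\<bar> + 1) ^ 3"
      using final_count m1 by blast
  qed
  show ?thesis
    unfolding Let_def XE using c1 c2 c3 c4 c5 by blast
qed


theorem theorem8:
  shows "\<exists>(alg :: nat \<Rightarrow> (nat \<Rightarrow> real) \<Rightarrow> (nat \<Rightarrow> real) list \<Rightarrow> (nat \<Rightarrow> real))
            (C::real) (K::real) (d::nat).
    \<forall>(n::nat) (c :: nat \<Rightarrow> real) (a :: nat \<Rightarrow> nat \<Rightarrow> real).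
      n \<ge> 1 \<longrightarrow> (\<forall>j<n. c j > 0) \<longrightarrow>
      (\<forall>i. (\<forall>j<n. 0 \<le> a i j) \<and> (\<exists>j<n. 0 < a i j)) \<longrightarrow>
      (let X = (\<lambda>m. alg n c (map a [0..<m])) in
         (\<forall>j<n. X 0 j = 0)
       \<and> (\<forall>m. \<forall>j<n. X m j \<le> X (Suc m) j)
       \<and> (\<forall>m. feasible n a m (X m))
       \<and> (\<forall>m\<ge>1. cost n c (X m) \<le> C * (1 + ln (real n)) * OPT n c a m)
       \<and> (\<forall>m\<ge>1. real (card {i. i < m \<and> (\<exists>j<n. X i j \<noteq> X (Suc i) j)})
                 \<le> K * (real n + \<bar>ln (OPT n c a m)\<bar> + \<bar>ln (1 / alpha1 n c a)\<bar> + 1) ^ d))"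
  apply (rule exI[of _ alg])
  apply (rule exI[of _ 496])
  apply (rule exI[of _ 84])
  apply (rule exI[of _ 3])
  apply (intro allI impI)
  apply (rule main_all)
  apply auto
  done


end
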